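(* In the social learning model with Gaussian signals, for every $\varepsilon>0$ there exists $k>0$ such that for all $t\ge1$, $$\mathbb{P}_+\big(a_t=-1\,\big|\,a_\tau=+1\text{ for all }\tau<t\big)>\frac{k}{t^{1+\varepsilon}}.$$
   Context: Social learning model. A state $\theta\in\{-1,+1\}$ is drawn with $\mathbb{P}(\theta=+1)=\mathbb{P}(\theta=-1)=1/2$. Agents $t=1,2,\dots$ receive private signals $s_t\in\mathbb{R}$ that are i.i.d. conditionally on $\theta$, with CDF $F_+$ if $\theta=+1$ and $F_-$ if $\theta=-1$; $F_+$ and $F_-$ are mutually absolutely continuous. Let $L_t=\log\frac{\mathbb{P}(\theta=+1\mid s_t)}{\mathbb{P}(\theta=-1\mid s_t)}$ be the private log-likelihood ratio, and let $G_+$, $G_-$ denote the CDFs of $L_t$ conditional on $\theta=+1$, $\theta=-1$ respectively. Signals are assumed unbounded: for every $M\in\mathbb{R}$, $\mathbb{P}(L_t>M)>0$ and $\mathbb{P}(L_t<-M)>0$. Agent $t$ observes $a_1,\dots,a_{t-1}$ and her own signal and chooses $a_t\in\{-1,+1\}$ (utility $1$ if $a_t=\theta$, else $0$). The public belief is $\mu_t=\mathbb{P}(\theta=+1\mid a_1,\dots,a_{t-1})$ and $\ell_t=\log\frac{\mu_t}{1-\mu_t}$ (so $\ell_1=0$). In equilibrium $a_t=+1$ iff $\ell_t+L_t>0$, and otherwise $a_t=-1$. Consequently $\ell_{t+1}=\ell_t+D_+(\ell_t)$ if $a_t=+1$ and $\ell_{t+1}=\ell_t+D_-(\ell_t)$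 if $a_t=-1$, where $D_+(x)=\log\frac{1-G_+(-x)}{1-G_-(-x)}$ and $D_-(x)=\log\frac{G_+(-x)}{G_-(-x)}$. We write $\mathbb{P}_+(\cdot)=\mathbb{P}(\cdot\mid\theta=+1)$ and $\mathbb{E}_+$ for the corresponding expectation. Gaussian signals: $F_+$ is the normal distribution with mean $+1$ and variance $\sigma^2$, and $F_-$ is the normal distribution with mean $-1$ and variance $\sigma^2$, for some $\sigma>0$. *)

theory Defs
  imports "HOL-Probability.Probability"
begin

text \<open>Gaussian social learning model with noise standard deviation sigma.
  Signal law conditional on theta = +1 / -1.\<close>

definition sig_dist :: "real \<Rightarrow> real \<Rightarrow> real measure" where
  "sig_dist m \<sigma> = density lborel (normal_density m \<sigma>)"

text \<open>Private log-likelihood ratio L = log (P(theta=+1|s) / P(theta=-1|s)), uniform prior,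
  i.e. the log of the density ratio.\<close>
definition Llr :: "real \<Rightarrow> real \<Rightarrow> real" where
  "Llr \<sigma> s = ln (((1/2) * normal_density 1 \<sigma> s) / ((1/2) * normal_density (-1) \<sigma> s))"

definition Gp :: "real \<Rightarrow> real \<Rightarrow> real" where
  "Gp \<sigma> x = measure (sig_dist 1 \<sigma>) {s \<in> space (sig_dist 1 \<sigma>). Llr \<sigma> s \<le> x}"

definition Gm :: "real \<Rightarrow> real \<Rightarrow> real" where
  "Gm \<sigma> x = measure (sig_dist (-1) \<sigma>) {s \<in> space (sig_dist (-1) \<sigma>). Llr \<sigma> s \<le> x}"

definition Dp :: "real \<Rightarrow> real \<Rightarrow> real" where
  "Dp \<sigma> x = ln ((1 - Gp \<sigma> (-x)) / (1 - Gm \<sigma> (-x)))"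

definition Dm :: "real \<Rightarrow> real \<Rightarrow> real" where
  "Dm \<sigma> x = ln (Gp \<sigma> (-x) / Gm \<sigma> (-x))"

text \<open>Signals: omega t is the private signal of agent t (t = 1, 2, ...; omega 0 is unused).
  pub_ll sigma omega t is the public log-likelihood ratio ell_t, for t >= 1; ell_1 = 0.
  (For t = 0 it is also 0, a dummy value.)\<close>
fun pub_ll :: "real \<Rightarrow> (nat \<Rightarrow> real) \<Rightarrow> nat \<Rightarrow> real" where
  "pub_ll \<sigma> \<omega> 0 = 0"
| "pub_ll \<sigma> \<omega> (Suc 0) = 0"
| "pub_ll \<sigma> \<omega> (Suc (Suc n)) =
     (let l = pub_ll \<sigma> \<omega> (Suc n) in
      if l + Llr \<sigma> (\<omega> (Suc n)) > 0 then l + Dp \<sigma> l else l + Dm \<sigma> l)"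

definition action :: "real \<Rightarrow> (nat \<Rightarrow> real) \<Rightarrow> nat \<Rightarrow> int" where
  "action \<sigma> \<omega> t = (if pub_ll \<sigma> \<omega> t + Llr \<sigma> (\<omega> t) > 0 then 1 else -1)"

definition Pplus :: "real \<Rightarrow> (nat \<Rightarrow> real) measure" where
  "Pplus \<sigma> = PiM UNIV (\<lambda>_. sig_dist 1 \<sigma>)"

definition cond_prob_first_minus :: "real \<Rightarrow> nat \<Rightarrow> real" where
  "cond_prob_first_minus \<sigma> t =
     measure (Pplus \<sigma>) {\<omega> \<in> space (Pplus \<sigma>). action \<sigma> \<omega> t = -1 \<and> (\<forall>\<tau>\<in>{1..<t}. action \<sigma> \<omega> \<tau> = 1)}
     / measure (Pplus \<sigma>) {\<omega> \<in> space (Pplus \<sigma>). \<forall>\<tau>\<in>{1..<t}. action \<sigma> \<omega> \<tau> = 1}"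

end

theory Submission
  imports Defs
begin

lemma emeasure_sig:
  assumes "A \<in> sets borel"
  shows "emeasure (sig_dist m \<sigma>) A = (\<integral>\<^sup>+x. ennreal (normal_density m \<sigma> x) * indicator A x \<partial>lborel)"
  unfolding sig_dist_def apply (subst emeasure_density)
  using assms apply simp_all
  done

lemma prob_sig: "\<sigma> > 0 \<Longrightarrow> prob_space (sig_dist m \<sigma>)"
  unfolding sig_dist_def by (rule prob_space_normal_density)

lemma space_sig[simp]: "space (sig_dist m \<sigma>) = UNIV"
  unfolding sig_dist_def by simp

lemma sets_sig[simp]: "sets (sig_dist m \<sigma>) = sets borel"
  unfolding sig_dist_def by simp

lemma ennreal_measure_sig:
  assumes "A \<in> sets borel" "\<sigma> > 0"
  shows "ennreal (measure (sig_dist m \<sigma>) A) = (\<integral>\<^sup>+x. ennreal (normal_density m \<sigma> x) * indicator A x \<partial>lborel)"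
proof -
  interpret prob_space "sig_dist m \<sigma>" using assms(2) by (rule prob_sig)
  show ?thesis using emeasure_sig[OF assms(1)] emeasure_eq_measure by metis
qed

lemma lower_sig:
  assumes "c \<le> m" "\<sigma> > 0"
  shows "measure (sig_dist m \<sigma>) {..c} \<ge> normal_density m \<sigma> (c - 1)"
proof -
  have "ennreal (normal_density m \<sigma> (c - 1)) = (\<integral>\<^sup>+x. ennreal (normal_density m \<sigma> (c - 1)) * indicator {c-1..c} x \<partial>lborel)"
    by (simp add: nn_integral_cmult_indicator)
  also have "\<dots> \<le> (\<integral>\<^sup>+x. ennreal (normal_density m \<sigma> x) * indicator {..c} x \<partial>lborel)"
  proof (intro nn_integral_mono)
    fix x
    show "ennreal (normal_density m \<sigma> (c - 1)) * indicator {c-1..c} x \<le> ennreal (normal_density m \<sigma> x) * indicator {..c} x"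
    proof (cases "x \<in> {c-1..c}")
      case True
      then have "(x - m)^2 \<le> (c - 1 - m)^2" using assms
        by (intro power2_mono) auto
      then have "- ((c - 1 - m)^2)/(2*\<sigma>^2) \<le> - ((x - m)^2)/(2*\<sigma>^2)"
        by (simp add: divide_right_mono)
      then have "normal_density m \<sigma> (c - 1) \<le> normal_density m \<sigma> x"
        unfolding normal_density_def by (intro mult_left_mono) auto
      with True show ?thesis by (auto simp: indicator_def)
    qed (auto simp: indicator_def)
  qed
  also have "\<dots> = ennreal (measure (sig_dist m \<sigma>) {..c})"
    using assms by (simp add: ennreal_measure_sig)
  finally show ?thesis by (simp add: ennreal_le_iff)
qed

lemma upper_sig:
  assumes "c \<le> m" "\<sigma> > 0"
  shows "measure (sig_dist m \<sigma>) {..c} \<le> exp (- ((c - m)^2)/(2*\<sigma>^2))"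
proof -
  let ?E = "exp (- ((c - m)^2)/(2*\<sigma>^2))"
  have "ennreal (measure (sig_dist m \<sigma>) {..c}) = (\<integral>\<^sup>+x. ennreal (normal_density m \<sigma> x) * indicator {..c} x \<partial>lborel)"
    using assms by (simp add: ennreal_measure_sig)
  also have "\<dots> \<le> (\<integral>\<^sup>+x. ennreal ?E * (ennreal (normal_density c \<sigma> x) * indicator {..c} x) \<partial>lborel)"
  proof (intro nn_integral_mono)
    fix x
    show "ennreal (normal_density m \<sigma> x) * indicator {..c} x \<le> ennreal ?E * (ennreal (normal_density c \<sigma> x) * indicator {..c} x)"
    proof (cases "x \<le> c")
      case True
      have "(c - m) * (2*x - m - c) \<ge> (c - m)^2"
        using True assms(1) by (simp add: power2_eq_square mult_left_mono_neg)
      then have "(x - m)^2 - (x - c)^2 \<ge> (c - m)^2" by (simp add: power2_eq_square algebra_simps)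
      then have "- ((x - m)^2)/(2*\<sigma>^2) \<le> - ((c - m)^2)/(2*\<sigma>^2) - (x - c)^2/(2*\<sigma>^2)"
        using assms(2) by (simp add: field_simps)
      then have "exp (- ((x - m)^2)/(2*\<sigma>^2)) \<le> ?E * exp (- ((x - c)^2)/(2*\<sigma>^2))"
        by (simp flip: exp_add)
      then have "normal_density m \<sigma> x \<le> ?E * normal_density c \<sigma> x"
        unfolding normal_density_def by (simp add: divide_right_mono)
      with True show ?thesis by (auto simp: indicator_def ennreal_mult[symmetric])
    qed (auto simp: indicator_def)
  qed
  also have "\<dots> = ennreal ?E * ennreal (measure (sig_dist c \<sigma>) {..c})"
    using assms by (simp add: nn_integral_cmult ennreal_measure_sig)
  also have "\<dots> \<le> ennreal ?E * 1"
  proof -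
    interpret prob_space "sig_dist c \<sigma>" using assms by (intro prob_sig)
    show ?thesis by (intro mult_left_mono) auto
  qed
  finally show ?thesis by (simp add: ennreal_le_iff)
qed

lemma compare_sig:
  assumes "c \<le> 0" "\<sigma> > 0"
  shows "measure (sig_dist 1 \<sigma>) {..c} \<le> measure (sig_dist (-1) \<sigma>) {..c}"
proof -
  have "ennreal (measure (sig_dist 1 \<sigma>) {..c}) \<le> ennreal (measure (sig_dist (-1) \<sigma>) {..c})"
    unfolding ennreal_measure_sig[OF atMost_borel assms(2)]
  proof (intro nn_integral_mono)
    fix x
    show "ennreal (normal_density 1 \<sigma> x) * indicator {..c} x \<le> ennreal (normal_density (-1) \<sigma> x) * indicator {..c} x"
    proof (cases "x \<le> c")
      case True
      then have "(x + 1)^2 \<le> (x - 1)^2" using assms by (simp add: power2_eq_square algebra_simps)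
      then have "- ((x - 1)^2)/(2*\<sigma>^2) \<le> - ((x - (-1))^2)/(2*\<sigma>^2)"
        by (simp add: divide_right_mono)
      then have "normal_density 1 \<sigma> x \<le> normal_density (-1) \<sigma> x"
        unfolding normal_density_def by (intro mult_left_mono) auto
      with True show ?thesis by (auto simp: indicator_def)
    qed (auto simp: indicator_def)
  qed
  then show ?thesis by (simp add: ennreal_le_iff)
qed


lemma lower_sig_right:
  assumes "m \<le> c" "\<sigma> > 0"
  shows "measure (sig_dist m \<sigma>) {c<..} \<ge> normal_density m \<sigma> (c + 1)"
proof -
  have "ennreal (normal_density m \<sigma> (c + 1)) = (\<integral>\<^sup>+x. ennreal (normal_density m \<sigma> (c + 1)) * indicator {c<..c+1} x \<partial>lborel)"
    by (simp add: nn_integral_cmult_indicator)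
  also have "\<dots> \<le> (\<integral>\<^sup>+x. ennreal (normal_density m \<sigma> x) * indicator {c<..} x \<partial>lborel)"
  proof (intro nn_integral_mono)
    fix x
    show "ennreal (normal_density m \<sigma> (c + 1)) * indicator {c<..c+1} x \<le> ennreal (normal_density m \<sigma> x) * indicator {c<..} x"
    proof (cases "x \<in> {c<..c+1}")
      case True
      then have "(x - m)^2 \<le> (c + 1 - m)^2" using assms
        by (intro power2_mono) auto
      then have "- ((c + 1 - m)^2)/(2*\<sigma>^2) \<le> - ((x - m)^2)/(2*\<sigma>^2)"
        by (simp add: divide_right_mono)
      then have "normal_density m \<sigma> (c + 1) \<le> normal_density m \<sigma> x"
        unfolding normal_density_def by (intro mult_left_mono) auto
      with True show ?thesis by (auto simp: indicator_def)
    qed (auto simp: indicator_def)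
  qed
  also have "\<dots> = ennreal (measure (sig_dist m \<sigma>) {c<..})"
    using assms by (simp add: ennreal_measure_sig)
  finally show ?thesis by (simp add: ennreal_le_iff)
qed

lemma Llr_eq:
  assumes "\<sigma> > 0"
  shows "Llr \<sigma> s = 2 * s / \<sigma>^2"
proof -
  have "((1/2) * normal_density 1 \<sigma> s) / ((1/2) * normal_density (-1) \<sigma> s)
      = exp (- ((s - 1)^2) / (2*\<sigma>^2)) / exp (- ((s + 1)^2) / (2*\<sigma>^2))"
    unfolding normal_density_def using assms by simp
  also have "\<dots> = exp (2 * s / \<sigma>^2)"
    using assms by (simp add: exp_diff[symmetric] field_simps power2_eq_square)
  finally show ?thesis unfolding Llr_def by simp
qed

definition pp :: "real \<Rightarrow> real \<Rightarrow> real" where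
  "pp \<sigma> l = measure (sig_dist 1 \<sigma>) {..-(l * \<sigma>^2/2)}"
definition qq :: "real \<Rightarrow> real \<Rightarrow> real" where
  "qq \<sigma> l = measure (sig_dist (-1) \<sigma>) {..-(l * \<sigma>^2/2)}"

lemma set_Llr:
  assumes "\<sigma> > 0"
  shows "{s. Llr \<sigma> s \<le> x} = {..x * \<sigma>^2/2}"
  using assms by (auto simp: Llr_eq field_simps)

lemma Gp_pp: "\<sigma> > 0 \<Longrightarrow> Gp \<sigma> (-l) = pp \<sigma> l"
  unfolding Gp_def pp_def using set_Llr[of \<sigma> "-l"] by simp
lemma Gm_qq: "\<sigma> > 0 \<Longrightarrow> Gm \<sigma> (-l) = qq \<sigma> l"
  unfolding Gm_def qq_def using set_Llr[of \<sigma> "-l"] by simp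

lemma pp_le_qq: "\<sigma> > 0 \<Longrightarrow> l \<ge> 0 \<Longrightarrow> pp \<sigma> l \<le> qq \<sigma> l"
  unfolding pp_def qq_def by (rule compare_sig) auto

lemma qq_mono: assumes "\<sigma> > 0" "l \<ge> 0" shows "qq \<sigma> l \<le> qq \<sigma> 0"
proof -
  interpret prob_space "sig_dist (-1) \<sigma>" using assms(1) by (rule prob_sig)
  show ?thesis unfolding qq_def using assms by (intro finite_measure_mono) auto
qed

lemma qq0_lt1: assumes "\<sigma> > 0" shows "qq \<sigma> 0 < 1"
proof -
  interpret prob_space "sig_dist (-1) \<sigma>" using assms(1) by (rule prob_sig)
  have "measure (sig_dist (-1) \<sigma>) {0<..} > 0"
    using lower_sig_right[of "-1" 0 \<sigma>] normal_density_pos[OF assms, of "-1" 1] assms by simp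
  moreover have "measure (sig_dist (-1) \<sigma>) {0<..} = 1 - qq \<sigma> 0"
    unfolding qq_def using prob_compl[of "{..0}"] by (simp add: Compl_eq_Diff_UNIV[symmetric] Compl_atMost)
  ultimately show ?thesis by simp
qed

lemma pp_pos: assumes "\<sigma> > 0" "l \<ge> 0" shows "pp \<sigma> l > 0"
proof -
  have "l * \<sigma>^2 \<ge> 0" using assms by simp
  then have "pp \<sigma> l \<ge> normal_density 1 \<sigma> (-(l * \<sigma>^2/2) - 1)"
    unfolding pp_def using assms by (intro lower_sig) linarith+
  then show ?thesis using normal_density_pos[OF assms(1)] by (meson less_le_trans)
qed


lemma quad_bound:
  fixes A B C y :: real
  assumes "A > 0"
  shows "- A * y^2 + B * y + C \<le> C + B^2 / (4 * A)"
proof -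
  have "0 \<le> A * (y - B / (2*A))^2" using assms by simp
  also have "A * (y - B / (2*A))^2 = A * y^2 - B * y + B^2/(4*A)"
    using assms by (simp add: power2_eq_square field_simps)
  finally show ?thesis by simp
qed

lemma potential:
  fixes r \<beta> M :: real
  assumes r: "r > 0" and b: "0 < \<beta>" "\<beta> < 1" and M: "M \<ge> 0"
  shows "\<exists>B\<ge>0. \<forall>v d. 0 \<le> d \<and> d \<le> M * exp (- r * v^2) \<longrightarrow>
           exp (\<beta> * r * (v + d)^2) \<le> exp (\<beta> * r * v^2) + B"
proof -
  define A where "A = (1 - \<beta>) * r"
  define Bq where "Bq = 2 * \<beta> * r * M + 2"
  define C where "C = \<beta> * r * M^2 + M"
  define B where "B = \<beta> * r * M * exp (C + Bq^2 / (4 * A))"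
  have A: "A > 0" unfolding A_def using r b by simp
  have B0: "B \<ge> 0" unfolding B_def using r b M by simp
  have main: "exp (\<beta> * r * (v + d)^2) \<le> exp (\<beta> * r * v^2) + B"
    if d: "0 \<le> d" "d \<le> M * exp (- r * v^2)" for v d
  proof -
    define y where "y = \<bar>v\<bar>"
    have y0: "y \<ge> 0" unfolding y_def by simp
    have vy: "v^2 = y^2" unfolding y_def by simp
    have e1: "exp (- r * v^2) \<le> 1" using r by simp
    have dM: "d \<le> M" using d(2) e1 M by (meson mult_left_le order_trans)
    let ?X = "\<beta> * r * v^2" and ?Y = "\<beta> * r * (v + d)^2"
    have "1 + (?X - ?Y) \<le> exp (?X - ?Y)" by (rule exp_ge_add_one_self)
    then have "exp ?Y * (1 + (?X - ?Y)) \<le> exp ?Y * exp (?X - ?Y)" by (simp add: mult_left_mono)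
    then have i: "exp ?Y - exp ?X \<le> (?Y - ?X) * exp ?Y"
      by (simp add: exp_diff algebra_simps)
    have "(v + d)^2 - v^2 = d * (2 * v + d)" by (simp add: power2_eq_square algebra_simps)
    also have "\<dots> \<le> d * (2*y + M)"
      using d(1) dM unfolding y_def by (intro mult_left_mono) auto
    also have "\<dots> \<le> (M * exp (- r * v^2)) * (2*y + M)"
      using d(2) y0 M by (intro mult_right_mono) auto
    finally have ii: "(v + d)^2 - v^2 \<le> M * exp (- r * v^2) * (2*y + M)" .
    have "\<bar>v + d\<bar> \<le> \<bar>y + M\<bar>" unfolding y_def using d(1) dM M by auto
    then have iii: "(v + d)^2 \<le> (y + M)^2" by (rule power2_mono)
    have "?Y - ?X = \<beta> * r * ((v + d)^2 - v^2)" by (simp add: algebra_simps)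
    also have "\<dots> \<le> \<beta> * r * (M * exp (- r * v^2) * (2*y + M))"
      using ii r b by (intro mult_left_mono) auto
    finally have "(?Y - ?X) * exp ?Y \<le> \<beta> * r * (M * exp (- r * v^2) * (2*y + M)) * exp ?Y"
      by (intro mult_right_mono) auto
    also have "\<dots> = \<beta> * r * M * ((2*y + M) * exp (- r * y^2 + ?Y))"
      by (simp add: vy exp_add[symmetric] mult_exp_exp algebra_simps)
    also have "\<dots> \<le> \<beta> * r * M * (exp (2*y + M) * exp (- r * y^2 + \<beta> * r * (y + M)^2))"
    proof (intro mult_left_mono mult_mono)
      have "2*y + M \<le> 1 + (2*y + M)" by simp
      also have "\<dots> \<le> exp (2*y + M)" by (rule exp_ge_add_one_self)
      finally show "2*y + M \<le> exp (2*y + M)" .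
      show "exp (- r * y^2 + ?Y) \<le> exp (- r * y^2 + \<beta> * r * (y + M)^2)"
        using iii r b by (simp add: mult_left_mono)
    qed (use r b M y0 in auto)
    also have "\<dots> = \<beta> * r * M * exp (- A * y^2 + Bq * y + C)"
      unfolding A_def Bq_def C_def by (simp add: exp_add[symmetric] power2_eq_square algebra_simps)
    also have "\<dots> \<le> \<beta> * r * M * exp (C + Bq^2 / (4 * A))"
      using quad_bound[OF A, of y Bq C] r b M by (intro mult_left_mono) auto
    finally have "exp ?Y - exp ?X \<le> B" using i unfolding B_def by linarith
    then show ?thesis by simp
  qed
  show ?thesis using B0 main by blast
qed


lemma Dp_eq: "\<sigma> > 0 \<Longrightarrow> Dp \<sigma> l = ln ((1 - pp \<sigma> l) / (1 - qq \<sigma> l))"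
  unfolding Dp_def by (simp add: Gp_pp Gm_qq)

lemma Dp_bounds:
  assumes s: "\<sigma> > 0" and l: "l \<ge> 0"
  shows "0 \<le> Dp \<sigma> l" "Dp \<sigma> l \<le> qq \<sigma> l / (1 - qq \<sigma> 0)"
proof -
  have q: "qq \<sigma> l < 1" using qq_mono[OF s l] qq0_lt1[OF s] by simp
  have pq: "pp \<sigma> l \<le> qq \<sigma> l" by (rule pp_le_qq[OF s l])
  have p0: "pp \<sigma> l \<ge> 0" unfolding pp_def by simp
  have "1 \<le> (1 - pp \<sigma> l) / (1 - qq \<sigma> l)" using q pq by simp
  then show "0 \<le> Dp \<sigma> l" using Dp_eq[OF s] by simp
  have "Dp \<sigma> l \<le> (1 - pp \<sigma> l) / (1 - qq \<sigma> l) - 1"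
    unfolding Dp_eq[OF s] using q pq p0 by (intro ln_le_minus_one) (auto intro!: divide_pos_pos)
  also have "\<dots> \<le> 1 / (1 - qq \<sigma> l) - 1" using q p0 by (simp add: divide_right_mono)
  also have "\<dots> = qq \<sigma> l / (1 - qq \<sigma> l)" using q by (simp add: field_simps)
  also have "\<dots> \<le> qq \<sigma> l / (1 - qq \<sigma> 0)"
    using qq_mono[OF s l] qq0_lt1[OF s] q by (intro divide_left_mono) (auto simp: qq_def)
  finally show "Dp \<sigma> l \<le> qq \<sigma> l / (1 - qq \<sigma> 0)" .
qed

lemma qq_upper:
  assumes s: "\<sigma> > 0" and l: "l \<ge> 0"
  shows "qq \<sigma> l \<le> exp (1/(2*\<sigma>^2)) * exp (- (1/(2*\<sigma>^2)) * (\<sigma>^2/2 * l - 1)^2)"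
proof (cases "\<sigma>^2/2 * l \<ge> 1")
  case True
  have "qq \<sigma> l \<le> exp (- ((-(l * \<sigma>^2/2) - -1)^2)/(2*\<sigma>^2))"
    unfolding qq_def using True s by (intro upper_sig) (auto simp: algebra_simps)
  also have "(-(l * \<sigma>^2/2) - -1)^2 = (\<sigma>^2/2 * l - 1)^2"
    by (simp add: power2_eq_square algebra_simps)
  also have "exp (- ((\<sigma>^2/2 * l - 1)^2)/(2*\<sigma>^2)) = exp (- (1/(2*\<sigma>^2)) * (\<sigma>^2/2 * l - 1)^2)"
    by simp
  also have "\<dots> \<le> exp (1/(2*\<sigma>^2)) * exp (- (1/(2*\<sigma>^2)) * (\<sigma>^2/2 * l - 1)^2)"
    using s by (simp add: mult_le_cancel_right1)
  finally show ?thesis .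
next
  case False
  interpret prob_space "sig_dist (-1) \<sigma>" using s by (rule prob_sig)
  have "qq \<sigma> l \<le> 1" unfolding qq_def by simp
  have h: "0 \<le> \<sigma>^2/2 * l" using l by simp
  have "\<bar>\<sigma>^2/2 * l - 1\<bar> \<le> \<bar>1\<bar>" using False h by auto
  then have "(\<sigma>^2/2 * l - 1)^2 \<le> 1^2" by (rule power2_mono)
  then have "(\<sigma>^2/2 * l - 1)^2 \<le> 1" by simp
  then have "(1/(2*\<sigma>^2)) * (\<sigma>^2/2 * l - 1)^2 \<le> 1/(2*\<sigma>^2)"
    using s by (simp add: divide_right_mono)
  then have "0 \<le> 1/(2*\<sigma>^2) + - (1/(2*\<sigma>^2)) * (\<sigma>^2/2 * l - 1)^2" by linarith
  then have "1 \<le> exp (1/(2*\<sigma>^2) + - (1/(2*\<sigma>^2)) * (\<sigma>^2/2 * l - 1)^2)"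
    using one_le_exp_iff by blast
  then have "1 \<le> exp (1/(2*\<sigma>^2)) * exp (- (1/(2*\<sigma>^2)) * (\<sigma>^2/2 * l - 1)^2)"
    by (simp only: exp_add)
  then show ?thesis using \<open>qq \<sigma> l \<le> 1\<close> by linarith
qed

lemma pp_lower:
  assumes s: "\<sigma> > 0" and l: "l \<ge> 0"
  shows "pp \<sigma> l \<ge> 1 / sqrt (2 * pi * \<sigma>^2) * exp (- (1/(2*\<sigma>^2)) * (\<sigma>^2/2 * l + 2)^2)"
proof -
  have "l * \<sigma>^2 \<ge> 0" using l by simp
  then have "pp \<sigma> l \<ge> normal_density 1 \<sigma> (-(l * \<sigma>^2/2) - 1)"
    unfolding pp_def using s by (intro lower_sig) linarith+
  also have "normal_density 1 \<sigma> (-(l * \<sigma>^2/2) - 1) = 1 / sqrt (2 * pi * \<sigma>^2) * exp (- (1/(2*\<sigma>^2)) * (\<sigma>^2/2 * l + 2)^2)"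
  proof -
    have "(-(l * \<sigma>^2/2) - 1 - 1)^2 = (\<sigma>^2/2 * l + 2)^2"
      by (simp add: power2_eq_square algebra_simps)
    then show ?thesis unfolding normal_density_def by simp
  qed
  finally show ?thesis .
qed


primrec ell :: "real \<Rightarrow> nat \<Rightarrow> real" where
  "ell \<sigma> 0 = 0"
| "ell \<sigma> (Suc n) = ell \<sigma> n + Dp \<sigma> (ell \<sigma> n)"

lemma ell_nonneg: "\<sigma> > 0 \<Longrightarrow> ell \<sigma> n \<ge> 0"
  by (induction n) (auto intro: add_nonneg_nonneg Dp_bounds(1))

lemma main_bound:
  assumes s: "\<sigma> > 0" and e: "\<epsilon> > 0"
  shows "\<exists>k>0. \<forall>n. pp \<sigma> (ell \<sigma> n) > k / real (Suc n) powr (1 + \<epsilon>)"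
proof -
  define a where "a = \<sigma>^2/2"
  define r where "r = 1/(2*\<sigma>^2)"
  define q0 where "q0 = qq \<sigma> 0"
  define M where "M = a * exp r / (1 - q0)"
  define \<gamma> where "\<gamma> = \<epsilon>/3"
  define \<beta> where "\<beta> = (1 + \<gamma>) / (1 + \<epsilon>)"
  define v where "v n = a * ell \<sigma> n - 1" for n
  have a: "a > 0" unfolding a_def using s by simp
  have r: "r > 0" unfolding r_def using s by simp
  have q0: "q0 < 1" unfolding q0_def by (rule qq0_lt1[OF s])
  have M: "M \<ge> 0" unfolding M_def using a q0 by simp
  have g: "\<gamma> > 0" unfolding \<gamma>_def using e by simp
  have b: "0 < \<beta>" "\<beta> < 1" unfolding \<beta>_def \<gamma>_def using e by (auto simp: field_simps)
  have b1: "\<beta> * (1 + \<epsilon>) = 1 + \<gamma>" unfolding \<beta>_def using e by simp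
  obtain B where B: "B \<ge> 0" and Bp: "\<And>v d. 0 \<le> d \<Longrightarrow> d \<le> M * exp (- r * v^2) \<Longrightarrow>
           exp (\<beta> * r * (v + d)^2) \<le> exp (\<beta> * r * v^2) + B"
    using potential[OF r b M] by blast
  have step: "v (Suc n) = v n + a * Dp \<sigma> (ell \<sigma> n)" for n
    unfolding v_def by (simp add: algebra_simps)
  have dbound: "0 \<le> a * Dp \<sigma> (ell \<sigma> n) \<and> a * Dp \<sigma> (ell \<sigma> n) \<le> M * exp (- r * (v n)^2)" for n
  proof -
    have l: "ell \<sigma> n \<ge> 0" by (rule ell_nonneg[OF s])
    have "a * Dp \<sigma> (ell \<sigma> n) \<le> a * (qq \<sigma> (ell \<sigma> n) / (1 - q0))"
      using Dp_bounds(2)[OF s l] a unfolding q0_def by (intro mult_left_mono) auto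
    also have "\<dots> \<le> a * ((exp r * exp (- r * (v n)^2)) / (1 - q0))"
      using qq_upper[OF s l] a q0 unfolding r_def v_def a_def
      by (intro mult_left_mono divide_right_mono) (auto simp: algebra_simps)
    also have "\<dots> = M * exp (- r * (v n)^2)" unfolding M_def by simp
    finally show ?thesis using Dp_bounds(1)[OF s l] a by simp
  qed
  define W0 where "W0 = exp (\<beta> * r * (v 0)^2)"
  have W: "exp (\<beta> * r * (v n)^2) \<le> W0 + B * n" for n
  proof (induction n)
    case 0 then show ?case unfolding W0_def by simp
  next
    case (Suc n)
    have "exp (\<beta> * r * (v (Suc n))^2) \<le> exp (\<beta> * r * (v n)^2) + B"
      unfolding step using dbound[of n] by (intro Bp) auto
    with Suc show ?case by (simp add: algebra_simps)
  qed
  have W01: "W0 \<ge> 1" unfolding W0_def using b r by simp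
  define Z where "Z = 1 / sqrt (2 * pi * \<sigma>^2) * exp (- r * (9 * (1 + 1/\<gamma>)))"
  define K0 where "K0 = Z / (W0 + B) powr (1 + \<epsilon>)"
  have Z: "Z > 0" unfolding Z_def using s by simp
  have K0: "K0 > 0" unfolding K0_def using Z W01 B by simp
  have bound: "pp \<sigma> (ell \<sigma> n) \<ge> K0 / real (Suc n) powr (1 + \<epsilon>)" for n
  proof -
    have l: "ell \<sigma> n \<ge> 0" by (rule ell_nonneg[OF s])
    have sq: "(v n + 3)^2 \<le> (1 + \<gamma>) * (v n)^2 + 9 * (1 + 1/\<gamma>)"
    proof -
      have "0 \<le> \<gamma> * (v n - 3/\<gamma>)^2" using g by simp
      also have "\<gamma> * (v n - 3/\<gamma>)^2 = \<gamma> * (v n)^2 - 6 * v n + 9/\<gamma>"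
        using g by (simp add: power2_eq_square field_simps)
      finally show ?thesis by (simp add: power2_eq_square algebra_simps)
    qed
    have "pp \<sigma> (ell \<sigma> n) \<ge> 1 / sqrt (2 * pi * \<sigma>^2) * exp (- r * (v n + 3)^2)"
      using pp_lower[OF s l] unfolding r_def v_def a_def by (simp add: algebra_simps)
    moreover have "exp (- r * (v n + 3)^2) \<ge> exp (- r * (9 * (1 + 1/\<gamma>))) * exp (- ((1 + \<gamma>) * r * (v n)^2))"
    proof -
      have "r * (v n + 3)^2 \<le> r * ((1 + \<gamma>) * (v n)^2 + 9 * (1 + 1/\<gamma>))"
        using sq r by (intro mult_left_mono) auto
      then have "- r * (9 * (1 + 1/\<gamma>)) + - ((1 + \<gamma>) * r * (v n)^2) \<le> - r * (v n + 3)^2"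
        by (simp add: algebra_simps)
      then show ?thesis by (simp only: exp_add[symmetric] exp_le_cancel_iff)
    qed
    ultimately have p1: "pp \<sigma> (ell \<sigma> n) \<ge> Z * exp (- ((1 + \<gamma>) * r * (v n)^2))"
      unfolding Z_def using s
      by (smt (verit, ccfv_SIG) divide_pos_pos mult_left_mono mult.assoc real_sqrt_gt_zero zero_less_mult_iff pi_gt_zero zero_less_power)
    have "exp ((1 + \<gamma>) * r * (v n)^2) = exp (\<beta> * r * (v n)^2) powr (1 + \<epsilon>)"
      by (simp add: powr_def b1[symmetric] algebra_simps)
    also have "\<dots> \<le> ((W0 + B) * real (Suc n)) powr (1 + \<epsilon>)"
    proof (intro powr_mono2)
      have "W0 + B * n \<le> (W0 + B) * real (Suc n)" using W01 B by (simp add: algebra_simps)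
      then show "exp (\<beta> * r * (v n)^2) \<le> (W0 + B) * real (Suc n)" using W[of n] by linarith
    qed (use e in auto)
    also have "\<dots> = (W0 + B) powr (1 + \<epsilon>) * real (Suc n) powr (1 + \<epsilon>)"
      using W01 B by (simp add: powr_mult)
    finally have p2: "exp ((1 + \<gamma>) * r * (v n)^2) \<le> (W0 + B) powr (1 + \<epsilon>) * real (Suc n) powr (1 + \<epsilon>)" .
    have "K0 / real (Suc n) powr (1 + \<epsilon>) = Z / ((W0 + B) powr (1 + \<epsilon>) * real (Suc n) powr (1 + \<epsilon>))"
      unfolding K0_def by simp
    also have "\<dots> \<le> Z / exp ((1 + \<gamma>) * r * (v n)^2)"
      using p2 Z W01 B by (intro divide_left_mono) auto
    also have "\<dots> = Z * exp (- ((1 + \<gamma>) * r * (v n)^2))" by (simp add: exp_minus divide_inverse)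
    finally show ?thesis using p1 by linarith
  qed
  show ?thesis
  proof (intro exI[of _ "K0/2"] conjI allI)
    show "K0/2 > 0" using K0 by simp
    fix n
    have "K0/2 / real (Suc n) powr (1 + \<epsilon>) < K0 / real (Suc n) powr (1 + \<epsilon>)"
      using K0 by (intro divide_strict_right_mono) auto
    then show "K0/2 / real (Suc n) powr (1 + \<epsilon>) < pp \<sigma> (ell \<sigma> n)" using bound[of n] by linarith
  qed
qed


lemma pub_ll_ell:
  assumes "t \<ge> 1" "\<forall>\<tau>\<in>{1..<t}. action \<sigma> \<omega> \<tau> = 1"
  shows "pub_ll \<sigma> \<omega> t = ell \<sigma> (t - 1)"
  using assms
proof (induction t)
  case 0 then show ?case by simp
next
  case (Suc t)
  show ?case
  proof (cases t)
    case 0 then show ?thesis by simp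
  next
    case (Suc n)
    have IH: "pub_ll \<sigma> \<omega> t = ell \<sigma> (t - 1)"
      using Suc.IH Suc.prems \<open>t = Suc n\<close> by auto
    have "action \<sigma> \<omega> t = 1" using Suc.prems \<open>t = Suc n\<close> by auto
    then have pos: "pub_ll \<sigma> \<omega> t + Llr \<sigma> (\<omega> t) > 0"
      unfolding action_def by (auto split: if_splits)
    show ?thesis using IH pos \<open>t = Suc n\<close> by (simp add: Let_def)
  qed
qed

lemma actions_iff:
  "(\<forall>\<tau>\<in>{1..<t}. action \<sigma> \<omega> \<tau> = 1) \<longleftrightarrow> (\<forall>\<tau>\<in>{1..<t}. ell \<sigma> (\<tau> - 1) + Llr \<sigma> (\<omega> \<tau>) > 0)"
proof (induction t)
  case 0 then show ?case by simp
next
  case (Suc t)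
  show ?case
  proof (cases "t = 0")
    case True then show ?thesis by simp
  next
    case False
    then have I: "{1..<Suc t} = insert t {1..<t}" by auto
    show ?thesis
    proof
      assume L: "\<forall>\<tau>\<in>{1..<Suc t}. action \<sigma> \<omega> \<tau> = 1"
      then have Lt: "\<forall>\<tau>\<in>{1..<t}. action \<sigma> \<omega> \<tau> = 1" by auto
      have "pub_ll \<sigma> \<omega> t = ell \<sigma> (t - 1)" using pub_ll_ell[OF _ Lt] False by simp
      moreover have "action \<sigma> \<omega> t = 1" using L False by auto
      ultimately have "ell \<sigma> (t - 1) + Llr \<sigma> (\<omega> t) > 0"
        unfolding action_def by (auto split: if_splits)
      then show "\<forall>\<tau>\<in>{1..<Suc t}. ell \<sigma> (\<tau> - 1) + Llr \<sigma> (\<omega> \<tau>) > 0"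
        using Suc.IH Lt unfolding I by auto
    next
      assume R: "\<forall>\<tau>\<in>{1..<Suc t}. ell \<sigma> (\<tau> - 1) + Llr \<sigma> (\<omega> \<tau>) > 0"
      then have Lt: "\<forall>\<tau>\<in>{1..<t}. action \<sigma> \<omega> \<tau> = 1" using Suc.IH by auto
      have "pub_ll \<sigma> \<omega> t = ell \<sigma> (t - 1)" using pub_ll_ell[OF _ Lt] False by simp
      moreover have "ell \<sigma> (t - 1) + Llr \<sigma> (\<omega> t) > 0" using R False by auto
      ultimately have "action \<sigma> \<omega> t = 1" unfolding action_def by simp
      then show "\<forall>\<tau>\<in>{1..<Suc t}. action \<sigma> \<omega> \<tau> = 1" using Lt unfolding I by auto
    qed
  qed
qed

lemma measure_Pplus_Collect:
  assumes s: "\<sigma> > 0" and J: "finite J" and X: "\<And>i. i \<in> J \<Longrightarrow> X i \<in> sets borel"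
  shows "measure (Pplus \<sigma>) {x\<in>space (Pplus \<sigma>). \<forall>i\<in>J. x i \<in> X i} = (\<Prod>i\<in>J. measure (sig_dist 1 \<sigma>) (X i))"
proof -
  interpret S: prob_space "sig_dist 1 \<sigma>" using s by (rule prob_sig)
  interpret product_prob_space "\<lambda>_. sig_dist 1 \<sigma>" UNIV by unfold_locales
  have "emeasure (Pplus \<sigma>) {x\<in>space (Pplus \<sigma>). \<forall>i\<in>J. x i \<in> X i} = (\<Prod>i\<in>J. emeasure (sig_dist 1 \<sigma>) (X i))"
    unfolding Pplus_def using J X by (intro emeasure_PiM_Collect) auto
  also have "\<dots> = ennreal (\<Prod>i\<in>J. measure (sig_dist 1 \<sigma>) (X i))"
    by (simp add: S.emeasure_eq_measure prod_ennreal)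
  finally show ?thesis
    unfolding Pplus_def by (simp add: P.emeasure_eq_measure prod_nonneg)
qed

lemma pos_set:
  assumes "\<sigma> > 0"
  shows "{s. 0 < e + Llr \<sigma> s} = {-(e * \<sigma>^2/2)<..}"
  using assms by (auto simp: Llr_eq[OF assms] field_simps)

lemma neg_set:
  assumes "\<sigma> > 0"
  shows "{s. \<not> 0 < e + Llr \<sigma> s} = {..-(e * \<sigma>^2/2)}"
  using assms by (auto simp: Llr_eq[OF assms] field_simps)

lemma pp_lt1: "\<sigma> > 0 \<Longrightarrow> l \<ge> 0 \<Longrightarrow> pp \<sigma> l < 1"
  using pp_le_qq[of \<sigma> l] qq_mono[of \<sigma> l] qq0_lt1[of \<sigma>] by linarith

lemma cond_eq:
  assumes s: "\<sigma> > 0" and t: "t \<ge> 1"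
  shows "cond_prob_first_minus \<sigma> t = pp \<sigma> (ell \<sigma> (t - 1))"
proof -
  interpret S: prob_space "sig_dist 1 \<sigma>" using s by (rule prob_sig)
  define X where "X \<tau> = (if \<tau> = t then {s. \<not> 0 < ell \<sigma> (\<tau> - 1) + Llr \<sigma> s} else {s. 0 < ell \<sigma> (\<tau> - 1) + Llr \<sigma> s})" for \<tau>
  have Xb: "X \<tau> \<in> sets borel" for \<tau> unfolding X_def using pos_set[OF s] neg_set[OF s] by auto
  have XJ: "\<forall>\<tau>\<in>{1..<t}. \<omega> \<tau> \<in> X \<tau> \<longleftrightarrow> ell \<sigma> (\<tau> - 1) + Llr \<sigma> (\<omega> \<tau>) > 0" for \<omega>
    unfolding X_def by auto
  have den: "{\<omega> \<in> space (Pplus \<sigma>). \<forall>\<tau>\<in>{1..<t}. action \<sigma> \<omega> \<tau> = 1} = {\<omega> \<in> space (Pplus \<sigma>). \<forall>\<tau>\<in>{1..<t}. \<omega> \<tau> \<in> X \<tau>}"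
    unfolding actions_iff using XJ by auto
  have num: "{\<omega> \<in> space (Pplus \<sigma>). action \<sigma> \<omega> t = -1 \<and> (\<forall>\<tau>\<in>{1..<t}. action \<sigma> \<omega> \<tau> = 1)} = {\<omega> \<in> space (Pplus \<sigma>). \<forall>\<tau>\<in>insert t {1..<t}. \<omega> \<tau> \<in> X \<tau>}"
  proof -
    have "action \<sigma> \<omega> t = -1 \<and> (\<forall>\<tau>\<in>{1..<t}. action \<sigma> \<omega> \<tau> = 1) \<longleftrightarrow> (\<forall>\<tau>\<in>insert t {1..<t}. \<omega> \<tau> \<in> X \<tau>)" for \<omega>
    proof (cases "\<forall>\<tau>\<in>{1..<t}. action \<sigma> \<omega> \<tau> = 1")
      case True
      then have "pub_ll \<sigma> \<omega> t = ell \<sigma> (t - 1)" using pub_ll_ell t by auto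
      moreover have "\<forall>\<tau>\<in>{1..<t}. \<omega> \<tau> \<in> X \<tau>" using True XJ[of \<omega>] actions_iff by blast
      ultimately show ?thesis using True unfolding action_def X_def by auto
    next
      case False
      then have "\<not> (\<forall>\<tau>\<in>{1..<t}. \<omega> \<tau> \<in> X \<tau>)" using XJ[of \<omega>] actions_iff by blast
      then show ?thesis using False by auto
    qed
    then show ?thesis by auto
  qed
  have prodpos: "(\<Prod>\<tau>\<in>{1..<t}. measure (sig_dist 1 \<sigma>) (X \<tau>)) \<noteq> 0"
  proof -
   have "measure (sig_dist 1 \<sigma>) (X \<tau>) \<noteq> 0" if "\<tau> \<in> {1..<t}" for \<tau>
   proof -
    have "X \<tau> = {-(ell \<sigma> (\<tau> - 1) * \<sigma>^2/2)<..}" unfolding X_def using pos_set[OF s] that by auto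
    then have "measure (sig_dist 1 \<sigma>) (X \<tau>) = 1 - pp \<sigma> (ell \<sigma> (\<tau> - 1))"
      unfolding pp_def using S.prob_compl[of "{..-(ell \<sigma> (\<tau> - 1) * \<sigma>^2/2)}"]
      by (simp add: Compl_eq_Diff_UNIV[symmetric] Compl_atMost)
    then show "measure (sig_dist 1 \<sigma>) (X \<tau>) \<noteq> 0" using pp_lt1[OF s ell_nonneg[OF s], of "\<tau> - 1"] by simp
   qed
   then show ?thesis by (simp add: prod_zero_iff)
  qed
  have Xt: "measure (sig_dist 1 \<sigma>) (X t) = pp \<sigma> (ell \<sigma> (t - 1))"
    unfolding X_def pp_def using neg_set[OF s] by simp
  have N: "measure (Pplus \<sigma>) {\<omega> \<in> space (Pplus \<sigma>). \<forall>\<tau>\<in>insert t {1..<t}. \<omega> \<tau> \<in> X \<tau>}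
      = measure (sig_dist 1 \<sigma>) (X t) * (\<Prod>\<tau>\<in>{1..<t}. measure (sig_dist 1 \<sigma>) (X \<tau>))"
    by (subst measure_Pplus_Collect[OF s]) (auto simp: Xb)
  have Dn: "measure (Pplus \<sigma>) {\<omega> \<in> space (Pplus \<sigma>). \<forall>\<tau>\<in>{1..<t}. \<omega> \<tau> \<in> X \<tau>}
      = (\<Prod>\<tau>\<in>{1..<t}. measure (sig_dist 1 \<sigma>) (X \<tau>))"
    by (subst measure_Pplus_Collect[OF s]) (auto simp: Xb)
  show ?thesis
    unfolding cond_prob_first_minus_def num den N Dn
    using prodpos Xt by simp
qed

theorem lemma7:
  fixes \<sigma> :: real
  assumes "\<sigma> > 0"
  shows "\<forall>\<epsilon>>0. \<exists>k>0. \<forall>t::nat. t \<ge> 1 \<longrightarrow>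
           cond_prob_first_minus \<sigma> t > k / (real t) powr (1 + \<epsilon>)"
proof (intro allI impI)
  fix \<epsilon> :: real assume e: "\<epsilon> > 0"
  obtain k where k: "k > 0" "\<And>n. pp \<sigma> (ell \<sigma> n) > k / real (Suc n) powr (1 + \<epsilon>)"
    using main_bound[OF assms e] by blast
  show "\<exists>k>0. \<forall>t::nat. t \<ge> 1 \<longrightarrow> cond_prob_first_minus \<sigma> t > k / (real t) powr (1 + \<epsilon>)"
  proof (intro exI[of _ k] conjI allI impI)
    fix t :: nat assume t: "t \<ge> 1"
    then have "Suc (t - 1) = t" by simp
    then show "cond_prob_first_minus \<sigma> t > k / (real t) powr (1 + \<epsilon>)"
      using k(2)[of "t - 1"] cond_eq[OF assms t] by simp
  qed (rule k(1))
qed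

end
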